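(* In the Classified Reallocation algorithm (with power-of-two laxities), in any round, the number of clients reallocated out of the big channel during the processing of that round's arrival is at most half of the number of clients active in the system at that round.
   Context: Model: discrete time; each client $c_i$ has arrival time, departure time and laxity $w_i$ (a power of $2$), and must transmit at least once in every $w_i$ consecutive time steps while active; one transmission per channel per time step. A round is the period between consecutive events, each round containing exactly one arrival or departure. A reallocation is a change of the channel of a client. For $x>0$, $\lceil\lceil x\rceil\rceil$ denotes the smallest power of $2$ not smaller than $x$. Classified Reallocation algorithm. Channels: one \emph{big channel} (all its clients transmit with period $\tau/2$) and \emph{$w$-channels} for powers of two $w$ (clients transmit with period $w$; at most $w$ clients; \emph{full} when holding $w$). State: $n$ (active clients, initially $0$), threshold $\tau$ (initially $2$). Arrival of $c_i$: $n\leftarrow n+1$. If $2\lceil\lceil n\rceil\rceil>\tau$: $\tau\leftarrow 2\lceil\lceil n\rceil\rceil$; each big-channel client $c_j$ with $w_j<\tau/2$ is reallocated to the non-full $w_j$-channel of minimum load (a new one reserved if needed); remaining big-channel clients get period $\tau/2$. Then if $w_i\ge\tau$, $c_i$ goes to the big channel; otherwise to the non-full $w_i$-channel of minimum load (new one reserved if needed). Departure of $c_i$ from channel $c$: $n\leftarrow n-1$. If $c$ is not the big channel: release $c$ if empty; otherwise if some $w_i$-channel $c'\ne c$ is not full, move one client from $c'$ to $c$. Then if $2\lceil\lceil n\rceil\rceil<\tau$: $\tau\leftarrow 2\lceil\lceil n\rceil\rceil$, big-channel clients get period $\tau/2$, and every $w$-channel with $w>2\tau$ has all its clients reallocated to the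 big channel and is released. *)

theory Defs
  imports Main
begin

text \<open>A channel exists (is reserved) exactly when it holds
at least one client; an emptied channel is thereby released.\<close>

definition pow2 :: "nat \<Rightarrow> bool" where
  "pow2 p \<longleftrightarrow> (\<exists>k. p = 2 ^ k)"

definition ceilpow :: "nat \<Rightarrow> nat" where
  "ceilpow x = (LEAST p. pow2 p \<and> x \<le> p)"

datatype chan = Big | WCh nat nat  (* WCh w k : the k-th w-channel *)

record state =
  nn   :: nat                       (* number of active clients *)
  tau  :: nat
  asg  :: "nat \<Rightarrow> chan option"      (* channel of each client; None = inactive *)
  lax  :: "nat \<Rightarrow> nat"

definition init :: state where
  "init = \<lparr>nn = 0, tau = 2, asg = (\<lambda>_. None), lax = (\<lambda>_. 0)\<rparr>"

definition load :: "(nat \<Rightarrow> chan option) \<Rightarrow> chan \<Rightarrow> nat" where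
  "load f c = card {j. f j = Some c}"

definition nonfull :: "(nat \<Rightarrow> chan option) \<Rightarrow> nat \<Rightarrow> nat \<Rightarrow> bool" where
  "nonfull f w k \<longleftrightarrow> 0 < load f (WCh w k) \<and> load f (WCh w k) < w"

inductive insert_w :: "(nat \<Rightarrow> chan option) \<Rightarrow> nat \<Rightarrow> nat \<Rightarrow> (nat \<Rightarrow> chan option) \<Rightarrow> bool" where
  to_min: "nonfull f w k \<Longrightarrow> (\<forall>k'. nonfull f w k' \<longrightarrow> load f (WCh w k) \<le> load f (WCh w k'))
     \<Longrightarrow> insert_w f j w (f(j := Some (WCh w k)))"
| to_new: "(\<forall>k'. \<not> nonfull f w k') \<Longrightarrow> load f (WCh w k) = 0
     \<Longrightarrow> insert_w f j w (f(j := Some (WCh w k)))"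

inductive insert_all :: "(nat \<Rightarrow> nat) \<Rightarrow> (nat \<Rightarrow> chan option) \<Rightarrow> nat list \<Rightarrow> (nat \<Rightarrow> chan option) \<Rightarrow> bool" where
  nil: "insert_all L f [] f"
| cons: "insert_w f j (L j) f1 \<Longrightarrow> insert_all L f1 js f2 \<Longrightarrow> insert_all L f (j # js) f2"

inductive place :: "(nat \<Rightarrow> chan option) \<Rightarrow> nat \<Rightarrow> nat \<Rightarrow> nat \<Rightarrow> (nat \<Rightarrow> chan option) \<Rightarrow> bool" where
  big: "t \<le> w \<Longrightarrow> place f i w t (f(i := Some Big))"
| small: "w < t \<Longrightarrow> insert_w f i w f' \<Longrightarrow> place f i w t f'"

text \<open>Arrival of client i with laxity w. The natural number m is the number of
clients reallocated out of the big channel while processing this arrival.\<close>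
inductive arrive :: "state \<Rightarrow> nat \<Rightarrow> nat \<Rightarrow> nat \<Rightarrow> state \<Rightarrow> bool" where
  "asg s i = None \<Longrightarrow> pow2 w \<Longrightarrow>
   t' = (if 2 * ceilpow (nn s + 1) > tau s then 2 * ceilpow (nn s + 1) else tau s) \<Longrightarrow>
   M = (if 2 * ceilpow (nn s + 1) > tau s
        then {j. asg s j = Some Big \<and> lax s j < t' div 2} else {}) \<Longrightarrow>
   distinct js \<Longrightarrow> set js = M \<Longrightarrow>
   insert_all (lax s) (asg s) js f2 \<Longrightarrow>
   place f2 i w t' f3 \<Longrightarrow>
   arrive s i w (card M) \<lparr>nn = nn s + 1, tau = t', asg = f3, lax = (lax s)(i := w)\<rparr>"

inductive fill :: "(nat \<Rightarrow> chan option) \<Rightarrow> chan \<Rightarrow> nat \<Rightarrow> (nat \<Rightarrow> chan option) \<Rightarrow> bool" where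
  big: "fill f Big w f"
| empty: "load f c = 0 \<Longrightarrow> fill f c w f"
| none: "c \<noteq> Big \<Longrightarrow> 0 < load f c \<Longrightarrow> (\<forall>k'. WCh w k' \<noteq> c \<longrightarrow> \<not> nonfull f w k') \<Longrightarrow> fill f c w f"
| move: "c \<noteq> Big \<Longrightarrow> 0 < load f c \<Longrightarrow> WCh w k' \<noteq> c \<Longrightarrow> nonfull f w k' \<Longrightarrow>
         f j = Some (WCh w k') \<Longrightarrow> fill f c w (f(j := Some c))"

definition demote :: "nat \<Rightarrow> (nat \<Rightarrow> chan option) \<Rightarrow> (nat \<Rightarrow> chan option)" where
  "demote t f = (\<lambda>j. case f j of Some (WCh w k) \<Rightarrow> (if 2 * t < w then Some Big else f j) | _ \<Rightarrow> f j)"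

inductive depart :: "state \<Rightarrow> nat \<Rightarrow> state \<Rightarrow> bool" where
  "asg s i = Some c \<Longrightarrow>
   fill ((asg s)(i := None)) c (lax s i) f1 \<Longrightarrow>
   t' = (if 2 * ceilpow (nn s - 1) < tau s then 2 * ceilpow (nn s - 1) else tau s) \<Longrightarrow>
   f2 = (if 2 * ceilpow (nn s - 1) < tau s then demote t' f1 else f1) \<Longrightarrow>
   depart s i \<lparr>nn = nn s - 1, tau = t', asg = f2, lax = lax s\<rparr>"

inductive reach :: "state \<Rightarrow> bool" where
  init: "reach init"
| arr: "reach s \<Longrightarrow> arrive s i w m s' \<Longrightarrow> reach s'"
| dep: "reach s \<Longrightarrow> depart s i s' \<Longrightarrow> reach s'"

end

theory Submission
  imports Defs
begin

lemma cp_ex: "pow2 (ceilpow n) \<and> n \<le> ceilpow n"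
proof -
  have "pow2 (2^n) \<and> n \<le> 2^n" by (auto simp: pow2_def less_imp_le)
  then show ?thesis unfolding ceilpow_def by (rule LeastI)
qed

lemma cp_le: "pow2 p \<Longrightarrow> n \<le> p \<Longrightarrow> ceilpow n \<le> p"
  unfolding ceilpow_def by (rule Least_le) simp

lemma cp_mono: "n \<le> m \<Longrightarrow> ceilpow n \<le> ceilpow m"
  using cp_ex[of m] cp_le by (meson order_trans)

lemma cp_pos: "1 \<le> ceilpow n"
  using cp_ex[of n] by (auto simp: pow2_def)

lemma cp_suc: "ceilpow (n+1) \<le> 2 * ceilpow n"
proof -
  obtain k where k: "ceilpow n = 2^k" using cp_ex[of n] by (auto simp: pow2_def)
  have "pow2 (2 * ceilpow n)" using k by (auto simp: pow2_def intro: exI[of _ "Suc k"])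
  moreover have "n + 1 \<le> 2 * ceilpow n" using cp_ex[of n] cp_pos[of n] by linarith
  ultimately show ?thesis by (rule cp_le)
qed

lemma pow2_le: "pow2 a \<Longrightarrow> pow2 b \<Longrightarrow> a < 2 * b \<Longrightarrow> a \<le> b"
proof -
  assume "pow2 a" "pow2 b" "a < 2 * b"
  then obtain x y where "a = 2^x" "b = 2^y" by (auto simp: pow2_def)
  with \<open>a < 2*b\<close> have "(2::nat)^x < 2^(Suc y)" by simp
  then have "x < Suc y" using power_strict_increasing_iff[of "2::nat" x "Suc y"] by simp
  then have "x \<le> y" by simp
  then show ?thesis using \<open>a = 2^x\<close> \<open>b = 2^y\<close> by (simp add: power_increasing)
qed

lemma insert_w_D: "insert_w f j w f' \<Longrightarrow> \<exists>k. f' = f(j := Some (WCh w k))"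
  by (cases rule: insert_w.cases) auto

lemma insert_all_D: "insert_all L f js f2 \<Longrightarrow>
   (\<forall>j. j \<notin> set js \<longrightarrow> f2 j = f j) \<and> (\<forall>j. j \<in> set js \<longrightarrow> (\<exists>k. f2 j = Some (WCh (L j) k)))"
proof (induction rule: insert_all.induct)
  case (nil L f)
  then show ?case by simp
next
  case (cons f j L f1 js f2)
  then obtain k where "f1 = f(j := Some (WCh (L j) k))" using insert_w_D by blast
  with cons show ?case by (metis fun_upd_other fun_upd_same set_ConsD list.set_intros)
qed

lemma place_D: "place f i w t f' \<Longrightarrow> (t \<le> w \<and> f' = f(i := Some Big)) \<or> (\<exists>k. f' = f(i := Some (WCh w k)))"
  by (cases rule: place.cases) (auto dest: insert_w_D)

lemma fill_D: "fill f c w f1 \<Longrightarrow> f1 = f \<or> (\<exists>j k'. c \<noteq> Big \<and> f j = Some (WCh w k') \<and> f1 = f(j := Some c))"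
  by (cases rule: fill.cases) auto

definition inv :: "state \<Rightarrow> bool" where
  "inv s \<longleftrightarrow> tau s = 2 * ceilpow (nn s) \<and> finite {j. asg s j \<noteq> None} \<and>
     card {j. asg s j \<noteq> None} = nn s \<and> (\<forall>j. asg s j \<noteq> None \<longrightarrow> pow2 (lax s j)) \<and>
     (\<forall>j. asg s j = Some Big \<longrightarrow> tau s \<le> 2 * lax s j) \<and>
     (\<forall>j w k. asg s j = Some (WCh w k) \<longrightarrow> lax s j = w) \<and>
     (\<forall>x. 2 * card {j. asg s j = Some Big \<and> lax s j \<le> x} \<le> x)"

lemma inv_init: "inv init"
proof -
  have "ceilpow 0 = 1" unfolding ceilpow_def
    by (rule Least_equality) (auto simp: pow2_def intro: exI[of _ 0])
  then show ?thesis by (simp add: inv_def init_def)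
qed


lemma inv_arrive:
  assumes I: "inv s" and A: "arrive s i w m s'"
  shows "inv s'"
proof -
  let ?n = "nn s"
  from A obtain t' M js f2 f3 where
    ai: "asg s i = None" and pw: "pow2 w" and
    tdef: "t' = (if 2 * ceilpow (nn s + 1) > tau s then 2 * ceilpow (nn s + 1) else tau s)" and
    Mdef: "M = (if 2 * ceilpow (nn s + 1) > tau s
        then {j. asg s j = Some Big \<and> lax s j < t' div 2} else {})" and
    js: "set js = M" and ia: "insert_all (lax s) (asg s) js f2" and
    pl: "place f2 i w t' f3" and
    s': "s' = \<lparr>nn = nn s + 1, tau = t', asg = f3, lax = (lax s)(i := w)\<rparr>"
    by (cases rule: arrive.cases) blast
  have tau: "tau s = 2 * ceilpow ?n" and fin: "finite {j. asg s j \<noteq> None}"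
    and cd: "card {j. asg s j \<noteq> None} = ?n" and P: "\<forall>j. asg s j \<noteq> None \<longrightarrow> pow2 (lax s j)"
    and D: "\<forall>j. asg s j = Some Big \<longrightarrow> tau s \<le> 2 * lax s j"
    and F: "\<forall>j w k. asg s j = Some (WCh w k) \<longrightarrow> lax s j = w"
    and E: "\<forall>x. 2 * card {j. asg s j = Some Big \<and> lax s j \<le> x} \<le> x"
    using I by (auto simp: inv_def)
  have Msub: "M \<subseteq> {j. asg s j = Some Big}" using Mdef by auto
  have iM: "i \<notin> M" using Msub ai by auto
  from insert_all_D[OF ia] js have
    f2a: "\<forall>j. j \<notin> M \<longrightarrow> f2 j = asg s j" and
    f2b: "\<forall>j. j \<in> M \<longrightarrow> (\<exists>k. f2 j = Some (WCh (lax s j) k))" by auto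
  from place_D[OF pl] have
    f3i: "(t' \<le> w \<and> f3 = f2(i := Some Big)) \<or> (\<exists>k. f3 = f2(i := Some (WCh w k)))" .
  have H1: "\<And>j. j \<noteq> i \<Longrightarrow> j \<notin> M \<Longrightarrow> f3 j = asg s j" using f3i f2a by auto
  have H2: "\<And>j. j \<noteq> i \<Longrightarrow> j \<in> M \<Longrightarrow> \<exists>k. f3 j = Some (WCh (lax s j) k)" using f3i f2b by auto
  have H3: "(f3 i = Some Big \<and> t' \<le> w) \<or> (\<exists>k. f3 i = Some (WCh w k))" using f3i by auto
  have tge: "2 * ceilpow (?n + 1) \<le> t'" using tdef by auto
  have tle: "t' = 2 * ceilpow (?n + 1)"
    using tdef tau cp_mono[of ?n "?n+1"] by auto
  have dom: "{j. f3 j \<noteq> None} = insert i {j. asg s j \<noteq> None}"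
  proof (intro set_eqI iffI)
    fix j assume "j \<in> {j. f3 j \<noteq> None}"
    then show "j \<in> insert i {j. asg s j \<noteq> None}"
      using H1 Msub by (cases "j = i"; cases "j \<in> M") auto
  next
    fix j assume "j \<in> insert i {j. asg s j \<noteq> None}"
    then show "j \<in> {j. f3 j \<noteq> None}"
      using H1 H2 H3 by (cases "j = i"; cases "j \<in> M") fastforce+
  qed
  have fin': "finite {j. f3 j \<noteq> None}" using dom fin by simp
  have cd': "card {j. f3 j \<noteq> None} = ?n + 1" using dom fin cd ai by simp
  have P': "\<forall>j. f3 j \<noteq> None \<longrightarrow> pow2 (((lax s)(i := w)) j)"
  proof (intro allI impI)
    fix j assume "f3 j \<noteq> None"
    then show "pow2 (((lax s)(i := w)) j)"
      using H1 Msub P pw by (cases "j = i"; cases "j \<in> M") auto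
  qed
  have D': "\<forall>j. f3 j = Some Big \<longrightarrow> t' \<le> 2 * ((lax s)(i := w)) j"
  proof (intro allI impI)
    fix j assume b: "f3 j = Some Big"
    show "t' \<le> 2 * ((lax s)(i := w)) j"
    proof (cases "j = i")
      case True then show ?thesis using H3 b by auto
    next
      case False
      then have jM: "j \<notin> M" using H2 b by force
      then have ab: "asg s j = Some Big" using H1 False b by auto
      show ?thesis
      proof (cases "2 * ceilpow (nn s + 1) > tau s")
        case True
        then have "\<not> lax s j < t' div 2" using jM ab Mdef by auto
        then show ?thesis using False tle by auto
      next
        case False
        then show ?thesis using D ab tdef \<open>j \<noteq> i\<close> by auto
      qed
    qed
  qed
  have F': "\<forall>j w' k. f3 j = Some (WCh w' k) \<longrightarrow> ((lax s)(i := w)) j = w'"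
  proof (intro allI impI)
    fix j w' k assume b: "f3 j = Some (WCh w' k)"
    show "((lax s)(i := w)) j = w'"
    proof (cases "j = i")
      case True then show ?thesis using H3 b by auto
    next
      case False
      show ?thesis
      proof (cases "j \<in> M")
        case True then show ?thesis using H2[OF False] b False by auto
      next
        case nM: False then show ?thesis using H1[OF False nM] b F False by (metis fun_upd_other)
      qed
    qed
  qed
  have E': "\<forall>x. 2 * card {j. f3 j = Some Big \<and> ((lax s)(i := w)) j \<le> x} \<le> x"
  proof
    fix x
    let ?S' = "{j. f3 j = Some Big \<and> ((lax s)(i := w)) j \<le> x}"
    let ?S = "{j. asg s j = Some Big \<and> lax s j \<le> x}"
    show "2 * card ?S' \<le> x"
    proof (cases "i \<in> ?S'")
      case True
      then have "t' \<le> x" using H3 by auto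
      moreover have "?n + 1 \<le> ceilpow (?n + 1)" using cp_ex by blast
      moreover have "card ?S' \<le> ?n + 1"
      proof -
        have "?S' \<subseteq> {j. f3 j \<noteq> None}" by auto
        from card_mono[OF fin' this] show ?thesis using cd' by linarith
      qed
      ultimately show ?thesis using tge by linarith
    next
      case False
      have "?S' \<subseteq> ?S"
      proof
        fix j assume j: "j \<in> ?S'"
        then have ji: "j \<noteq> i" using False by auto
        then have "j \<notin> M" using H2 j by force
        then show "j \<in> ?S" using H1 ji j by auto
      qed
      moreover have "finite ?S" using fin by (rule rev_finite_subset) auto
      ultimately have "card ?S' \<le> card ?S" by (rule card_mono[rotated])
      then show ?thesis using E by (meson le_trans mult_le_mono2)
    qed
  qed
  show ?thesis unfolding inv_def s' using tle fin' cd' P' D' F' E' by simp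
qed


lemma demote_Big: "demote t f j = Some Big \<Longrightarrow> f j = Some Big \<or> (\<exists>w k. f j = Some (WCh w k) \<and> 2 * t < w)"
  by (auto simp: demote_def split: option.splits chan.splits if_splits)

lemma demote_W: "demote t f j = Some (WCh w k) \<Longrightarrow> f j = Some (WCh w k)"
  by (auto simp: demote_def split: option.splits chan.splits if_splits)

lemma demote_None: "(demote t f j = None) = (f j = None)"
  by (auto simp: demote_def split: option.splits chan.splits if_splits)

lemma inv_depart:
  assumes I: "inv s" and A: "depart s i s'"
  shows "inv s'"
proof -
  let ?n = "nn s"
  let ?f = "(asg s)(i := None)"
  from A obtain c f1 t' f2 where
    ai: "asg s i = Some c" and fl: "fill ?f c (lax s i) f1" and
    tdef: "t' = (if 2 * ceilpow (nn s - 1) < tau s then 2 * ceilpow (nn s - 1) else tau s)" and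
    f2d: "f2 = (if 2 * ceilpow (nn s - 1) < tau s then demote t' f1 else f1)" and
    s': "s' = \<lparr>nn = nn s - 1, tau = t', asg = f2, lax = lax s\<rparr>"
    by (cases rule: depart.cases) blast
  have tau: "tau s = 2 * ceilpow ?n" and fin: "finite {j. asg s j \<noteq> None}"
    and cd: "card {j. asg s j \<noteq> None} = ?n" and P: "\<forall>j. asg s j \<noteq> None \<longrightarrow> pow2 (lax s j)"
    and D: "\<forall>j. asg s j = Some Big \<longrightarrow> tau s \<le> 2 * lax s j"
    and F: "\<forall>j w k. asg s j = Some (WCh w k) \<longrightarrow> lax s j = w"
    and E: "\<forall>x. 2 * card {j. asg s j = Some Big \<and> lax s j \<le> x} \<le> x"
    using I by (auto simp: inv_def)
  have tle: "t' = 2 * ceilpow (?n - 1)"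
    using tdef tau cp_mono[of "?n - 1" ?n] by auto
  have tle2: "t' \<le> tau s" using tdef by auto
  from fill_D[OF fl] have fd: "f1 = ?f \<or> (\<exists>j k'. c \<noteq> Big \<and> ?f j = Some (WCh (lax s i) k') \<and> f1 = ?f(j := Some c))" .
  have G1: "\<And>j. (f1 j = None) = (?f j = None)"
  proof -
    fix j show "(f1 j = None) = (?f j = None)"
    proof (cases "f1 = ?f")
      case True then show ?thesis by simp
    next
      case False
      then obtain j0 k' where j0: "?f j0 = Some (WCh (lax s i) k')"
        and f1: "f1 = ?f(j0 := Some c)" using fd by blast
      show ?thesis using j0 f1 by (cases "j = j0") simp_all
    qed
  qed
  have G2: "\<And>j. f1 j = Some Big \<Longrightarrow> asg s j = Some Big"
  proof -
    fix j assume fj: "f1 j = Some Big"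
    show "asg s j = Some Big"
    proof (cases "f1 = ?f")
      case True then show ?thesis using fj by (cases "j = i") simp_all
    next
      case False
      then obtain j0 k' where c: "c \<noteq> Big" and j0: "?f j0 = Some (WCh (lax s i) k')"
        and f1: "f1 = ?f(j0 := Some c)" using fd by blast
      show ?thesis using j0 f1 fj c by (cases "j = j0"; cases "j = i") simp_all
    qed
  qed
  have G3: "\<And>j w k. f1 j = Some (WCh w k) \<Longrightarrow> lax s j = w"
  proof -
    fix j w k assume fj: "f1 j = Some (WCh w k)"
    show "lax s j = w"
    proof (cases "f1 = ?f")
      case True then show ?thesis using fj F by (metis fun_upd_apply option.distinct(1))
    next
      case False
      then obtain j0 k' where c: "c \<noteq> Big" and j0: "?f j0 = Some (WCh (lax s i) k')"
        and f1: "f1 = ?f(j0 := Some c)" using fd by blast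
      obtain v kk where cv: "c = WCh v kk" using c by (cases c) auto
      have lv: "lax s i = v" using F ai cv by auto
      have lj0: "lax s j0 = lax s i" using j0 F by (metis fun_upd_apply option.distinct(1))
      show ?thesis
      proof (cases "j = j0")
        case True then show ?thesis using fj f1 cv lv lj0 by simp
      next
        case False then show ?thesis using fj f1 F by (metis fun_upd_apply option.distinct(1))
      qed
    qed
  qed
  have N2: "\<And>j. (f2 j = None) = (f1 j = None)"
    using f2d demote_None by simp
  have domeq: "{j. f2 j \<noteq> None} = {j. asg s j \<noteq> None} - {i}"
  proof (intro set_eqI)
    fix j show "(j \<in> {j. f2 j \<noteq> None}) = (j \<in> {j. asg s j \<noteq> None} - {i})"
      using N2[of j] G1[of j] by (cases "j = i") (simp_all del: not_None_eq)
  qed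
  have fin': "finite {j. f2 j \<noteq> None}" using domeq fin by simp
  have cd': "card {j. f2 j \<noteq> None} = ?n - 1" using domeq fin cd ai by simp
  have P': "\<forall>j. f2 j \<noteq> None \<longrightarrow> pow2 (lax s j)" using domeq P by auto
  have BB: "\<And>j. f2 j = Some Big \<Longrightarrow> asg s j = Some Big \<or> 2 * t' < lax s j"
  proof -
    fix j assume b: "f2 j = Some Big"
    show "asg s j = Some Big \<or> 2 * t' < lax s j"
    proof (cases "2 * ceilpow (nn s - 1) < tau s")
      case True
      then have "demote t' f1 j = Some Big" using b f2d by simp
      from demote_Big[OF this] show ?thesis using G2 G3 by blast
    next
      case False then show ?thesis using b f2d G2 by simp
    qed
  qed
  have D': "\<forall>j. f2 j = Some Big \<longrightarrow> t' \<le> 2 * lax s j"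
  proof (intro allI impI)
    fix j assume "f2 j = Some Big"
    from BB[OF this] show "t' \<le> 2 * lax s j"
    proof
      assume "asg s j = Some Big" then show ?thesis using D tle2 by auto
    qed simp
  qed
  have F': "\<forall>j w k. f2 j = Some (WCh w k) \<longrightarrow> lax s j = w"
  proof (intro allI impI)
    fix j w k assume h: "f2 j = Some (WCh w k)"
    then have "f1 j = Some (WCh w k)" using f2d demote_W by (cases "2 * ceilpow (nn s - 1) < tau s") auto
    then show "lax s j = w" by (rule G3)
  qed
  have E': "\<forall>x. 2 * card {j. f2 j = Some Big \<and> lax s j \<le> x} \<le> x"
  proof
    fix x
    let ?S' = "{j. f2 j = Some Big \<and> lax s j \<le> x}"
    let ?S = "{j. asg s j = Some Big \<and> lax s j \<le> x}"
    show "2 * card ?S' \<le> x"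
    proof (cases "\<exists>j\<in>?S'. asg s j \<noteq> Some Big")
      case True
      then obtain j where "j \<in> ?S'" "asg s j \<noteq> Some Big" by blast
      then have "2 * t' < x" using BB by fastforce
      moreover have "?n - 1 \<le> ceilpow (?n - 1)" using cp_ex by blast
      moreover have "card ?S' \<le> ?n - 1"
      proof -
        have "?S' \<subseteq> {j. f2 j \<noteq> None}" by auto
        from card_mono[OF fin' this] show ?thesis using cd' by linarith
      qed
      ultimately show ?thesis using tle by linarith
    next
      case False
      then have "?S' \<subseteq> ?S" by auto
      moreover have "finite ?S" using fin by (rule rev_finite_subset) auto
      ultimately have "card ?S' \<le> card ?S" by (rule card_mono[rotated])
      then show ?thesis using E by (meson le_trans mult_le_mono2)
    qed
  qed
  show ?thesis unfolding inv_def s' using tle fin' cd' P' D' F' E' by simp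
qed

lemma reach_inv: "reach s \<Longrightarrow> inv s"
  by (induction rule: reach.induct) (auto intro: inv_init inv_arrive inv_depart)


theorem lemma2:
  assumes "reach s"
    and "arrive s i w m s'"
  shows "2 * m \<le> nn s'"
proof -
  have I: "inv s" using assms(1) by (rule reach_inv)
  let ?n = "nn s"
  from assms(2) obtain t' M where
    tdef: "t' = (if 2 * ceilpow (nn s + 1) > tau s then 2 * ceilpow (nn s + 1) else tau s)" and
    Mdef: "M = (if 2 * ceilpow (nn s + 1) > tau s
        then {j. asg s j = Some Big \<and> lax s j < t' div 2} else {})" and
    m: "m = card M" and n': "nn s' = nn s + 1"
    by (cases rule: arrive.cases) auto
  have tau: "tau s = 2 * ceilpow ?n" and fin: "finite {j. asg s j \<noteq> None}"
    and P: "\<forall>j. asg s j \<noteq> None \<longrightarrow> pow2 (lax s j)"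
    and D: "\<forall>j. asg s j = Some Big \<longrightarrow> tau s \<le> 2 * lax s j"
    and E: "\<forall>x. 2 * card {j. asg s j = Some Big \<and> lax s j \<le> x} \<le> x"
    using I by (auto simp: inv_def)
  show ?thesis
  proof (cases "2 * ceilpow (nn s + 1) > tau s")
    case False then show ?thesis using Mdef m by simp
  next
    case True
    let ?S = "{j. asg s j = Some Big \<and> lax s j \<le> ceilpow ?n}"
    have cpn: "ceilpow ?n \<le> ?n"
    proof (rule ccontr)
      assume "\<not> ceilpow ?n \<le> ?n"
      then have "?n + 1 \<le> ceilpow ?n" by simp
      then have "ceilpow (?n+1) \<le> ceilpow ?n" using cp_le cp_ex by blast
      then show False using True tau by simp
    qed
    have "M \<subseteq> ?S"
    proof
      fix j assume "j \<in> M"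
      then have b: "asg s j = Some Big" and l: "lax s j < ceilpow (?n + 1)"
        using True Mdef tdef by auto
      have "lax s j < 2 * ceilpow ?n" using l cp_suc[of ?n] by simp
      moreover have "pow2 (lax s j)" using P b by auto
      ultimately have "lax s j \<le> ceilpow ?n" using pow2_le cp_ex by blast
      then show "j \<in> ?S" using b by simp
    qed
    moreover have "finite ?S" using fin by (rule rev_finite_subset) auto
    ultimately have "card M \<le> card ?S" by (rule card_mono[rotated])
    then have "2 * m \<le> ceilpow ?n" using E m by (meson le_trans mult_le_mono2)
    then show ?thesis using cpn n' by simp
  qed
qed

end
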